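(* Let $0<\delta\le\frac12$ be fixed. There exist constants $C_\delta>0$ and $N_\delta$ depending only on $\delta$ such that for all integers $n\ge N_\delta$ and all integers $d>1$, $$\Big|\frac1d\sum_{1\le h\le d-1}\Big(1-\delta+\delta\cos\big(\tfrac{2\pi h}{d}\big)\Big)^{n/2}\Big|\le C_\delta\,\frac{\log n}{\sqrt n}.$$ *)

theory Defs
  imports "HOL-Analysis.Analysis"
begin

end

theory Submission
  imports Defs
begin

lemma cos_lb: fixes x :: real assumes "0 \<le> x" shows "1 - x^2/2 \<le> cos x"
proof -
  have "(\<lambda>t. cos t - 1 + t^2/2) 0 \<le> (\<lambda>t. cos t - 1 + t^2/2) x"
  proof (rule DERIV_nonneg_imp_nondecreasing[OF assms])
    fix t :: real assume t: "0 \<le> t" "t \<le> x"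
    show "\<exists>y. ((\<lambda>t. cos t - 1 + t^2/2) has_real_derivative y) (at t) \<and> 0 \<le> y"
      by (rule exI[of _ "- sin t + t"]) (auto intro!: derivative_eq_intros simp: sin_x_le_x t)
  qed
  then show ?thesis by simp
qed

lemma sin_lb: fixes x :: real assumes "0 \<le> x" shows "x - x^3/6 \<le> sin x"
proof -
  have "(\<lambda>t. sin t - t + t^3/6) 0 \<le> (\<lambda>t. sin t - t + t^3/6) x"
  proof (rule DERIV_nonneg_imp_nondecreasing[OF assms])
    fix t :: real assume t: "0 \<le> t" "t \<le> x"
    have "1 - t^2/2 \<le> cos t" using cos_lb t by simp
    then show "\<exists>y. ((\<lambda>t. sin t - t + t^3/6) has_real_derivative y) (at t) \<and> 0 \<le> y"
      by (intro exI[of _ "cos t - 1 + t^2/2"]) (auto intro!: derivative_eq_intros simp: power2_eq_square power3_eq_cube)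
  qed
  then show ?thesis by simp
qed

lemma sin_pi_lb: fixes t :: real assumes "0 \<le> t" "t \<le> 1/2" shows "t \<le> sin (pi * t)"
proof -
  have a: "pi*t - (pi*t)^3/6 \<le> sin (pi*t)" using sin_lb assms by simp
  have p: "3 < pi" "pi < 4" using pi_gt3 pi_less_4 by auto
  have "(pi*t)^2 \<le> 4"
  proof -
    have "pi * t \<le> 4 * (1/2)" using p assms by (intro mult_mono) auto
    moreover have "0 \<le> pi*t" using assms by simp
    ultimately have "(pi*t)^2 \<le> 2^2" by (intro power_mono) auto
    then show ?thesis by simp
  qed
  hence "pi*t - (pi*t)^3/6 \<ge> pi*t/3" 
  proof -
    have "(pi*t)^3 = (pi*t) * (pi*t)^2" by (simp add: power2_eq_square power3_eq_cube)
    moreover have "(pi*t) * (pi*t)^2 \<le> (pi*t)*4" using \<open>(pi*t)^2 \<le> 4\<close> assms by (intro mult_left_mono) auto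
    ultimately show ?thesis by simp
  qed
  moreover have "3*t \<le> pi*t" using p assms by (intro mult_right_mono) auto
  ultimately show ?thesis using a by linarith
qed

lemma base_props:
  fixes \<delta> :: real and h d :: nat
  assumes "0 < \<delta>" "\<delta> \<le> 1/2"
  shows "1 - \<delta> + \<delta> * cos (2 * pi * real h / real d) = 1 - 2*\<delta>*(sin (pi * (real h / real d)))^2"
    and "0 \<le> 1 - \<delta> + \<delta> * cos (2 * pi * real h / real d)"
    and "1 - \<delta> + \<delta> * cos (2 * pi * real h / real d) \<le> 1"
proof -
  have "cos (2 * pi * real h / real d) = cos (2 * (pi * (real h / real d)))" by (simp add: mult.assoc)
  also have "\<dots> = 1 - 2 * (sin (pi * (real h / real d)))^2" by (rule cos_double_sin)
  finally have c: "cos (2 * pi * real h / real d) = 1 - 2 * (sin (pi * (real h / real d)))^2" .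
  show e: "1 - \<delta> + \<delta> * cos (2 * pi * real h / real d) = 1 - 2*\<delta>*(sin (pi * (real h / real d)))^2"
    unfolding c by (simp add: algebra_simps)
  have s: "(sin (pi * (real h / real d)))^2 \<le> 1" using abs_sin_le_one by (simp add: abs_square_le_1) 
  have "2*\<delta>*(sin (pi * (real h / real d)))^2 \<le> 2*\<delta>*1" using s assms by (intro mult_left_mono) auto
  then show "0 \<le> 1 - \<delta> + \<delta> * cos (2 * pi * real h / real d)" using e assms by linarith
  show "1 - \<delta> + \<delta> * cos (2 * pi * real h / real d) \<le> 1" using e assms by simp
qed

lemma term_small:
  fixes \<delta> a :: real and h d n :: nat
  assumes "0 < \<delta>" "\<delta> \<le> 1/2" "1 \<le> h" "h < d" "0 < n" "0 \<le> a"
    and a2: "ln (real n) / (\<delta> * real n) \<le> a^2"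
    and "a * real d < real h" "a * real d < real d - real h"
  shows "(1 - \<delta> + \<delta> * cos (2 * pi * real h / real d)) powr (real n / 2) \<le> 1 / real n"
proof -
  define t where "t = real h / real d"
  define m where "m = min t (1 - t)"
  have d0: "0 < real d" using assms by simp
  have t0: "0 < t" "t < 1" using assms d0 by (auto simp: t_def field_simps)
  have "a < t" using assms d0 by (simp add: t_def field_simps)
  moreover have "a < 1 - t" using assms d0 by (simp add: t_def field_simps)
  ultimately have am: "a < m" by (simp add: m_def)
  have sm: "m \<le> sin (pi * t)"
  proof (cases "t \<le> 1/2")
    case True then show ?thesis using sin_pi_lb[of t] t0 by (simp add: m_def)
  next
    case False
    have "1 - t \<le> sin (pi * (1 - t))" using sin_pi_lb[of "1-t"] t0 False by simp
    also have "pi * (1 - t) = pi - pi * t" by (simp add: algebra_simps)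
    finally show ?thesis by (simp add: m_def)
  qed
  have m0: "0 \<le> m" using am assms by simp
  have "m^2 \<le> (sin (pi * t))^2" using sm m0 by (intro power_mono) auto
  hence "2*\<delta>*m^2 \<le> 2*\<delta>*(sin (pi * t))^2" using assms by (intro mult_left_mono) auto
  hence b1: "1 - \<delta> + \<delta> * cos (2 * pi * real h / real d) \<le> exp (-(2*\<delta>*m^2))"
    using base_props(1)[OF assms(1,2), of h d] exp_ge_add_one_self[of "-(2*\<delta>*m^2)"]
    by (simp add: t_def)
  have "(1 - \<delta> + \<delta> * cos (2 * pi * real h / real d)) powr (real n / 2) \<le> exp (-(2*\<delta>*m^2)) powr (real n / 2)"
    using base_props(2)[OF assms(1,2), of h d] b1 by (intro powr_mono2) auto
  also have "\<dots> = exp (-(\<delta> * real n * m^2))" by (simp add: exp_powr_real)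
  also have "\<dots> \<le> exp (- ln (real n))"
  proof -
    have "a^2 \<le> m^2" using am assms by (intro power_mono) auto
    hence "ln (real n) / (\<delta> * real n) \<le> m^2" using a2 by linarith
    hence "ln (real n) \<le> \<delta> * real n * m^2" using assms by (simp add: field_simps)
    then show ?thesis by simp
  qed
  also have "\<dots> = 1 / real n" using assms by (simp add: exp_minus inverse_eq_divide)
  finally show ?thesis .
qed

lemma floor_stuff:
  fixes x :: real assumes "0 \<le> x"
  shows "real (nat \<lfloor>x\<rfloor>) \<le> x" and "\<And>h::nat. real h \<le> x \<Longrightarrow> h \<le> nat \<lfloor>x\<rfloor>"
proof -
  show "real (nat \<lfloor>x\<rfloor>) \<le> x" using assms by simp
  fix h :: nat assume "real h \<le> x"
  hence "int h \<le> \<lfloor>x\<rfloor>" by (simp add: le_floor_iff)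
  thus "h \<le> nat \<lfloor>x\<rfloor>" by simp
qed

theorem lemma2p2:
  fixes \<delta> :: real
  assumes "0 < \<delta>" and "\<delta> \<le> 1/2"
  shows "\<exists>C>0. \<exists>N::nat. \<forall>n::nat\<ge>N. \<forall>d::nat. d > 1 \<longrightarrow>
    \<bar>(1 / real d) * (\<Sum>h=1..d-1. (1 - \<delta> + \<delta> * cos (2 * pi * real h / real d)) powr (real n / 2))\<bar>
      \<le> C * ln (real n) / sqrt (real n)"
proof (intro exI[of _ "1 + 2 / sqrt \<delta>"] conjI exI[of _ "3::nat"] allI impI)
  have "0 < 2 / sqrt \<delta>" using assms by simp
  then show "0 < 1 + 2 / sqrt \<delta>" by linarith
  fix n d :: nat assume n3: "3 \<le> n" and d1: "1 < d"
  define f where "f h = (1 - \<delta> + \<delta> * cos (2 * pi * real h / real d)) powr (real n / 2)" for h :: nat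
  define a where "a = sqrt (ln (real n) / (\<delta> * real n))"
  have n0: "0 < real n" using n3 by simp
  have ln1: "1 \<le> ln (real n)"
  proof -
    have "exp 1 \<le> (3::real)" using exp_le by simp
    also have "3 \<le> real n" using n3 by simp
    finally show ?thesis using n0 by (simp add: ln_ge_iff)
  qed
  have a0: "0 \<le> a" unfolding a_def using ln1 n0 assms by simp
  have a2: "a^2 = ln (real n) / (\<delta> * real n)" unfolding a_def using ln1 n0 assms by simp
  define K where "K = nat \<lfloor>a * real d\<rfloor>"
  have K1: "real K \<le> a * real d" unfolding K_def using floor_stuff(1) a0 by simp
  have K2: "\<And>h::nat. real h \<le> a * real d \<Longrightarrow> h \<le> K" unfolding K_def using floor_stuff(2) a0 by simp
  define A where "A = {1..d-1}"
  define S1 where "S1 = {h\<in>A. real h \<le> a * real d}"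
  define S2 where "S2 = {h\<in>A. real d - real h \<le> a * real d}"
  have f0: "0 \<le> f h" for h unfolding f_def by simp
  have fb: "f h \<le> 1 / real n + (if h \<in> S1 then 1 else 0) + (if h \<in> S2 then 1 else 0)" if h: "h \<in> A" for h
  proof (cases "h \<in> S1 \<or> h \<in> S2")
    case True
    have "f h \<le> 1" unfolding f_def using base_props[OF assms, of h d]
      by (intro powr_le1) auto
    moreover have "0 \<le> 1 / real n" using n0 by simp
    ultimately show ?thesis using True by (cases "h \<in> S1"; cases "h \<in> S2") (simp_all only: if_True if_False; linarith?; blast)+
  next
    case False
    have "f h \<le> 1 / real n" unfolding f_def
      using h False d1 n0 by (intro term_small[OF assms _ _ _ a0]) (auto simp: A_def S1_def S2_def a2)
    then show ?thesis using False by simp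
  qed
  have "sum f A \<le> (\<Sum>h\<in>A. 1 / real n + (if h \<in> S1 then 1 else 0) + (if h \<in> S2 then 1 else 0))"
    using fb by (rule sum_mono)
  also have "\<dots> = real (card A) / real n + real (card S1) + real (card S2)"
  proof -
    have "(\<Sum>h\<in>A. (if h \<in> S1 then 1 else 0)::real) = (\<Sum>h\<in>{h\<in>A. h\<in>S1}. 1)"
      by (rule sum.inter_filter[symmetric]) (simp add: A_def)
    also have "{h\<in>A. h\<in>S1} = S1" by (auto simp: S1_def)
    finally have "(\<Sum>h\<in>A. (if h \<in> S1 then 1 else 0)::real) = real (card S1)" by simp
    moreover have "(\<Sum>h\<in>A. (if h \<in> S2 then 1 else 0)::real) = real (card S2)"
    proof -
      have "(\<Sum>h\<in>A. (if h \<in> S2 then 1 else 0)::real) = (\<Sum>h\<in>{h\<in>A. h\<in>S2}. 1)"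
        by (rule sum.inter_filter[symmetric]) (simp add: A_def)
      also have "{h\<in>A. h\<in>S2} = S2" by (auto simp: S2_def)
      finally show ?thesis by simp
    qed
    ultimately show ?thesis by (simp add: sum.distrib)
  qed
  also have "\<dots> \<le> real d / real n + a * real d + a * real d"
  proof -
    have "card A \<le> d" by (simp add: A_def)
    hence "real (card A) / real n \<le> real d / real n" using n0 by (simp add: divide_right_mono)
    moreover have "card S1 \<le> K"
    proof -
      have "S1 \<subseteq> {1..K}" using K2 by (auto simp: S1_def A_def)
      then show ?thesis using card_mono[of "{1..K}" S1] by simp
    qed
    moreover have "card S2 \<le> K"
    proof -
      have "S2 \<subseteq> (\<lambda>k. d - k) ` {1..K}"
      proof
        fix h assume "h \<in> S2"
        hence h: "1 \<le> h" "h \<le> d - 1" "real d - real h \<le> a * real d" by (auto simp: S2_def A_def)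
        have "real (d - h) \<le> a * real d" using h d1 by (simp add: of_nat_diff)
        hence "d - h \<le> K" by (rule K2)
        moreover have "h = d - (d - h)" "1 \<le> d - h" using h d1 by auto
        ultimately show "h \<in> (\<lambda>k. d - k) ` {1..K}" by (intro image_eqI[of _ _ "d - h"]) auto
      qed
      hence "card S2 \<le> card ((\<lambda>k. d - k) ` {1..K})" by (intro card_mono) auto
      also have "\<dots> \<le> card {1..K}" by (rule card_image_le) simp
      finally show ?thesis by simp
    qed
    ultimately show ?thesis using K1 by linarith
  qed
  finally have sA: "sum f A \<le> real d / real n + 2 * a * real d" by simp
  have dpos: "0 < real d" using d1 by simp
  have "\<bar>(1 / real d) * sum f A\<bar> = (1 / real d) * sum f A"
    using f0 dpos by (simp add: sum_nonneg)
  also have "\<dots> \<le> (1 / real d) * (real d / real n + 2 * a * real d)"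
    using sA dpos by (intro mult_left_mono) auto
  also have "\<dots> = 1 / real n + 2 * a" using dpos by (simp add: field_simps)
  also have "\<dots> \<le> (1 + 2 / sqrt \<delta>) * ln (real n) / sqrt (real n)"
  proof -
    have sn: "1 \<le> sqrt (real n)" using n0 n3 by simp
    have "1 / real n \<le> 1 / sqrt (real n)"
    proof -
      have "sqrt (real n) * 1 \<le> sqrt (real n) * sqrt (real n)" using sn by (intro mult_left_mono) auto
      hence "sqrt (real n) \<le> real n" by simp
      then show ?thesis using sn by (intro divide_left_mono) auto
    qed
    also have "\<dots> \<le> ln (real n) / sqrt (real n)" using ln1 sn by (intro divide_right_mono) auto
    finally have t1: "1 / real n \<le> ln (real n) / sqrt (real n)" .
    have "a = sqrt (ln (real n)) / (sqrt \<delta> * sqrt (real n))"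
      unfolding a_def by (simp add: real_sqrt_divide real_sqrt_mult)
    also have "\<dots> \<le> ln (real n) / (sqrt \<delta> * sqrt (real n))"
    proof -
      have l1: "1 \<le> sqrt (ln (real n))" using ln1 by simp
      have "sqrt (ln (real n)) * 1 \<le> sqrt (ln (real n)) * sqrt (ln (real n))" using l1 by (intro mult_left_mono) auto
      hence "sqrt (ln (real n)) \<le> ln (real n)" using ln1 by simp
      then show ?thesis using assms n0 by (intro divide_right_mono) auto
    qed
    finally have t2: "2 * a \<le> (2 / sqrt \<delta>) * ln (real n) / sqrt (real n)" by (simp add: field_simps)
    have "(1 + 2 / sqrt \<delta>) * ln (real n) / sqrt (real n) = ln (real n) / sqrt (real n) + (2 / sqrt \<delta>) * ln (real n) / sqrt (real n)"
      by (simp add: algebra_simps add_divide_distrib)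
    then show ?thesis using t1 t2 by linarith
  qed
  finally show "\<bar>(1 / real d) * (\<Sum>h=1..d-1. (1 - \<delta> + \<delta> * cos (2 * pi * real h / real d)) powr (real n / 2))\<bar>
      \<le> (1 + 2 / sqrt \<delta>) * ln (real n) / sqrt (real n)" by (simp add: f_def A_def)
qed

end
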